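(* Let $G$ be a finite bipartite graph with vertex classes $A$ and $B$, and let $\lambda\geq 1$ be a real number. Then at least one of the following holds: (1) there is a vertex $v\in B$ and sets $A'\subseteq N(v)$ and $B'\subseteq B\setminus\{v\}$ such that $d(G[A',B'])\geq \lambda$; (2) there is a spanning subgraph $H\subseteq G$ with $d(H)\geq d(G)/(\lambda+1)$ and $d_H(x,y)\leq \lambda$ for all distinct $x,y\in B$.
   Context: $N(v)$ is the neighbourhood of $v$ in $G$. For disjoint vertex sets $A',B'$, $G[A',B']$ is the bipartite subgraph of $G$ with vertex set $A'\cup B'$ consisting of all edges of $G$ between $A'$ and $B'$. $d(\cdot)$ denotes average degree, $d(F)=2e(F)/|V(F)|$. For vertices $x,y$, the codegree $d_H(x,y)$ is the number of common neighbours of $x$ and $y$ in $H$. A spanning subgraph has the same vertex set as $G$. *)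

theory Defs
  imports Complex_Main
begin

text \<open>A finite bipartite graph with vertex classes A and B (disjoint finite sets) is
encoded by its edge set E, a set of pairs (a,b) with a in A and b in B.\<close>

definition avg_deg :: "'a set \<Rightarrow> ('a \<times> 'a) set \<Rightarrow> real" where
  "avg_deg V F = 2 * real (card F) / real (card V)"

definition bnbhd :: "('a \<times> 'a) set \<Rightarrow> 'a set \<Rightarrow> 'a \<Rightarrow> 'a set" where
  "bnbhd E A v = {a \<in> A. (a, v) \<in> E}"

definition bcodeg :: "('a \<times> 'a) set \<Rightarrow> 'a set \<Rightarrow> 'a \<Rightarrow> 'a \<Rightarrow> nat" where
  "bcodeg H A x y = card {a \<in> A. (a, x) \<in> H \<and> (a, y) \<in> H}"

end

theory Submission
  imports Defs
begin

lemma codeg_sym: "bcodeg H A x y = bcodeg H A y x"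
  unfolding bcodeg_def by (simp add: conj_commute)

lemma codeg_ins1: "x \<noteq> y \<Longrightarrow> x' \<noteq> y \<Longrightarrow> bcodeg (insert (a,y) H) A x x' = bcodeg H A x x'"
  unfolding bcodeg_def by auto

lemma codeg_ins2: "x \<noteq> y \<Longrightarrow> (a,x) \<notin> H \<Longrightarrow> bcodeg (insert (a,y) H) A x y = bcodeg H A x y"
  unfolding bcodeg_def by (rule arg_cong[where f=card]) auto

lemma codeg_ins3: assumes "finite A"
  shows "bcodeg (insert (a,y) H) A x y \<le> bcodeg H A x y + 1"
proof -
  have "{b \<in> A. (b, x) \<in> insert (a,y) H \<and> (b, y) \<in> insert (a,y) H}
        \<subseteq> insert a {b \<in> A. (b, x) \<in> H \<and> (b, y) \<in> H}" by auto
  hence "card {b \<in> A. (b, x) \<in> insert (a,y) H \<and> (b, y) \<in> insert (a,y) H}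
        \<le> card (insert a {b \<in> A. (b, x) \<in> H \<and> (b, y) \<in> H})"
    by (rule card_mono[rotated]) (simp add: assms)
  also have "\<dots> \<le> card {b \<in> A. (b, x) \<in> H \<and> (b, y) \<in> H} + 1"
    using assms by (simp add: card_insert_if)
  finally show ?thesis unfolding bcodeg_def .
qed

theorem lemma5:
  fixes A B :: "'a set" and E :: "('a \<times> 'a) set" and lam :: real
  assumes "finite A" and "finite B" and "A \<inter> B = {}"
    and "E \<subseteq> A \<times> B"
    and "lam \<ge> 1"
  shows "(\<exists>v\<in>B. \<exists>A' B'. A' \<subseteq> bnbhd E A v \<and> B' \<subseteq> B - {v} \<and>
            avg_deg (A' \<union> B') (E \<inter> (A' \<times> B')) \<ge> lam)
       \<or> (\<exists>H. H \<subseteq> E \<and> avg_deg (A \<union> B) H \<ge> avg_deg (A \<union> B) E / (lam + 1) \<and>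
            (\<forall>x\<in>B. \<forall>y\<in>B. x \<noteq> y \<longrightarrow> real (bcodeg H A x y) \<le> lam))"
proof (subst disj_commute, rule disjCI)
  assume neg: "\<not> (\<exists>v\<in>B. \<exists>A' B'. A' \<subseteq> bnbhd E A v \<and> B' \<subseteq> B - {v} \<and>
            avg_deg (A' \<union> B') (E \<inter> (A' \<times> B')) \<ge> lam)"
  have finE: "finite E" using assms(1,2,4) finite_subset by blast
  define P where "P H \<longleftrightarrow> H \<subseteq> E \<and> (\<forall>x\<in>B. \<forall>y\<in>B. x \<noteq> y \<longrightarrow> real (bcodeg H A x y) \<le> lam)" for H
  define S where "S = {H. P H}"
  have finS: "finite S" unfolding S_def P_def using finE by (simp add: finite_subset)
  have "{} \<in> S" unfolding S_def P_def bcodeg_def using assms(5) by simp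
  hence ne: "card ` S \<noteq> {}" by blast
  have "Max (card ` S) \<in> card ` S" using finS ne by (intro Max_in) auto
  then obtain H where HS: "H \<in> S" and Hmax: "card H = Max (card ` S)" by auto
  have maxH: "card H' \<le> card H" if "P H'" for H'
    using that finS unfolding Hmax S_def by (intro Max_ge) auto
  have PH: "P H" using HS S_def by simp
  have HE: "H \<subseteq> E" using PH P_def by simp
  have finH: "finite H" using HE finE finite_subset by blast
  have cod: "\<And>x y. x\<in>B \<Longrightarrow> y\<in>B \<Longrightarrow> x\<noteq>y \<Longrightarrow> real (bcodeg H A x y) \<le> lam"
    using PH P_def by simp
  have wit: "\<exists>x. x \<in> B \<and> x \<noteq> y \<and> (a,x) \<in> H \<and> real (bcodeg H A x y) + 1 > lam"
    if ay: "(a,y) \<in> E - H" for a y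
  proof (rule ccontr)
    assume nw: "\<not> ?thesis"
    have yB: "y \<in> B" using ay assms(4) by auto
    have "P (insert (a,y) H)"
      unfolding P_def
    proof (intro conjI ballI impI)
      show "insert (a, y) H \<subseteq> E" using ay HE by auto
    next
      fix x x' assume xB: "x \<in> B" and x'B: "x' \<in> B" and xx: "x \<noteq> x'"
      have gen: "real (bcodeg (insert (a,y) H) A z y) \<le> lam" if "z \<in> B" "z \<noteq> y" for z
      proof (cases "(a,z) \<in> H")
        case True
        hence "\<not> real (bcodeg H A z y) + 1 > lam" using nw that by blast
        moreover have "bcodeg (insert (a,y) H) A z y \<le> bcodeg H A z y + 1"
          using codeg_ins3[OF assms(1)] .
        ultimately show ?thesis by linarith
      next
        case False
        then show ?thesis using codeg_ins2[OF that(2) False] cod[OF that(1) yB that(2)] by simp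
      qed
      show "real (bcodeg (insert (a, y) H) A x x') \<le> lam"
      proof (cases "x = y")
        case True
        have "x' \<noteq> y" using xx True by simp
        hence "real (bcodeg (insert (a,y) H) A x' y) \<le> lam" using gen[OF x'B] by simp
        then show ?thesis using True by (subst codeg_sym) simp
      next
        case False
        show ?thesis
        proof (cases "x' = y")
          case True
          then show ?thesis using gen[OF xB False] by simp
        next
          case False2: False
          then show ?thesis using codeg_ins1[OF False False2] cod[OF xB x'B xx] by simp
        qed
      qed
    qed
    hence "card (insert (a,y) H) \<le> card H" by (rule maxH)
    moreover have "card (insert (a,y) H) = card H + 1" using ay finH by simp
    ultimately show False by simp
  qed
  define w where "w e = (SOME x. x \<in> B \<and> x \<noteq> snd e \<and> (fst e, x) \<in> H \<and> real (bcodeg H A x (snd e)) + 1 > lam)" for e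
  have wP: "w (a,y) \<in> B \<and> w (a,y) \<noteq> y \<and> (a, w (a,y)) \<in> H \<and> real (bcodeg H A (w (a,y)) y) + 1 > lam"
    if "(a,y) \<in> E - H" for a y
    using someI_ex[OF wit[OF that]] unfolding w_def by simp
  define Ax where "Ax x = {a\<in>A. (a,x)\<in>H}" for x
  define Yx where "Yx x = {y\<in>B-{x}. real (bcodeg H A x y) + 1 > lam}" for x
  define Fx where "Fx x = {e\<in>E-H. w e = x}" for x
  have keyx: "2 * real (card (Fx x)) \<le> lam * real (card (Ax x))" if xB: "x \<in> B" for x
  proof -
    have finAx: "finite (Ax x)" using assms(1) Ax_def by simp
    have finYx: "finite (Yx x)" using assms(2) Yx_def by simp
    have FxS: "Fx x \<subseteq> Ax x \<times> Yx x"
    proof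
      fix e assume "e \<in> Fx x"
      then obtain a y where e: "e = (a,y)" "(a,y) \<in> E - H" "w (a,y) = x" unfolding Fx_def
        by (cases e) auto
      have "a \<in> A" "y \<in> B" using e assms(4) by auto
      then show "e \<in> Ax x \<times> Yx x" using wP[OF e(2)] e unfolding Ax_def Yx_def by auto
    qed
    let ?EE = "E \<inter> (Ax x \<times> Yx x)"
    have finEE: "finite ?EE" using finE by simp
    have "Ax x \<subseteq> bnbhd E A x" using HE unfolding Ax_def bnbhd_def by auto
    moreover have "Yx x \<subseteq> B - {x}" unfolding Yx_def by auto
    ultimately have lt: "\<not> avg_deg (Ax x \<union> Yx x) ?EE \<ge> lam" using neg xB by blast
    have disj: "Ax x \<inter> Yx x = {}" using assms(3) unfolding Ax_def Yx_def by auto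
    have cU: "card (Ax x \<union> Yx x) = card (Ax x) + card (Yx x)"
      using card_Un_disjoint[OF finAx finYx disj] .
    have b1: "2 * real (card ?EE) \<le> lam * (real (card (Ax x)) + real (card (Yx x)))"
    proof (cases "card (Ax x \<union> Yx x) = 0")
      case True
      hence "Ax x = {}" "Yx x = {}" using finAx finYx by auto
      then show ?thesis by simp
    next
      case False
      then have "2 * real (card ?EE) / real (card (Ax x \<union> Yx x)) < lam"
        using lt unfolding avg_deg_def by simp
      then show ?thesis using False cU by (simp add: divide_simps)
    qed
    let ?HH = "H \<inter> (Ax x \<times> Yx x)"
    have a1: "Fx x \<union> ?HH \<subseteq> ?EE" using FxS HE unfolding Fx_def by auto
    have a2: "Fx x \<inter> ?HH = {}" unfolding Fx_def by auto
    have a3: "finite (Fx x)" using finE unfolding Fx_def by simp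
    have a4: "finite ?HH" using finH by simp
    have b2: "card (Fx x) + card ?HH \<le> card ?EE"
    proof -
      have "card (Fx x \<union> ?HH) = card (Fx x) + card ?HH" using card_Un_disjoint[OF a3 a4 a2] .
      moreover have "card (Fx x \<union> ?HH) \<le> card ?EE" using card_mono[OF finEE a1] .
      ultimately show ?thesis by simp
    qed
    have HHeq: "?HH = (\<lambda>(y,a). (a,y)) ` (SIGMA y:Yx x. {a\<in>A. (a,x)\<in>H \<and> (a,y)\<in>H})"
      unfolding Ax_def by auto
    have "card ?HH = card (SIGMA y:Yx x. {a\<in>A. (a,x)\<in>H \<and> (a,y)\<in>H})"
      unfolding HHeq by (rule card_image) (auto simp: inj_on_def)
    also have "\<dots> = (\<Sum>y\<in>Yx x. bcodeg H A x y)"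
      unfolding bcodeg_def using finYx assms(1) by (subst card_SigmaI) auto
    finally have cHH: "card ?HH = (\<Sum>y\<in>Yx x. bcodeg H A x y)" .
    have "lam * real (card (Yx x)) = (\<Sum>y\<in>Yx x. lam)" by simp
    also have "\<dots> \<le> (\<Sum>y\<in>Yx x. 2 * real (bcodeg H A x y))"
    proof (rule sum_mono)
      fix y assume "y \<in> Yx x"
      hence c: "real (bcodeg H A x y) + 1 > lam" unfolding Yx_def by simp
      hence "bcodeg H A x y \<ge> 1" using assms(5) by (cases "bcodeg H A x y") auto
      hence "real (bcodeg H A x y) \<ge> 1" by simp
      then show "lam \<le> 2 * real (bcodeg H A x y)" using c by (cases "lam \<le> 2") auto
    qed
    also have "\<dots> = 2 * real (card ?HH)" unfolding cHH by (simp add: sum_distrib_left)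
    finally have b3: "lam * real (card (Yx x)) \<le> 2 * real (card ?HH)" .
    have "real (card (Fx x)) + real (card ?HH) \<le> real (card ?EE)" using b2 by linarith
    then show ?thesis using b1 b3 by (simp add: algebra_simps)
  qed
  have "E - H \<subseteq> (\<Union>x\<in>B. Fx x)"
  proof
    fix e assume "e \<in> E - H"
    then obtain a y where "e = (a,y)" "(a,y) \<in> E - H" by (cases e) auto
    then show "e \<in> (\<Union>x\<in>B. Fx x)" using wP unfolding Fx_def by auto
  qed
  hence "card (E - H) \<le> card (\<Union>x\<in>B. Fx x)"
    by (rule card_mono[rotated]) (rule finite_subset[OF _ finE], auto simp: Fx_def)
  also have "\<dots> \<le> (\<Sum>x\<in>B. card (Fx x))" using card_UN_le[OF assms(2)] .
  finally have "real (card (E - H)) \<le> real (\<Sum>x\<in>B. card (Fx x))" by (simp only: of_nat_le_iff)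
  hence "real (card (E - H)) \<le> (\<Sum>x\<in>B. real (card (Fx x)))" by (simp only: of_nat_sum)
  hence s1: "2 * real (card (E - H)) \<le> (\<Sum>x\<in>B. 2 * real (card (Fx x)))"
    by (simp only: sum_distrib_left[symmetric])
  also have "\<dots> \<le> (\<Sum>x\<in>B. lam * real (card (Ax x)))" by (rule sum_mono) (rule keyx)
  also have "\<dots> = lam * real (\<Sum>x\<in>B. card (Ax x))" by (simp add: sum_distrib_left)
  also have "(\<Sum>x\<in>B. card (Ax x)) = card H"
  proof -
    have "H = (\<lambda>(x,a). (a,x)) ` (SIGMA x:B. Ax x)" using HE assms(4) unfolding Ax_def by auto
    moreover have "inj_on (\<lambda>(x,a). (a,x)) (SIGMA x:B. Ax x)" by (auto simp: inj_on_def)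
    ultimately have "card H = card (SIGMA x:B. Ax x)" by (simp add: card_image)
    also have "\<dots> = (\<Sum>x\<in>B. card (Ax x))" using assms(1,2) unfolding Ax_def by (subst card_SigmaI) auto
    finally show ?thesis by simp
  qed
  finally have s2: "2 * real (card (E - H)) \<le> lam * real (card H)" .
  have cE: "card E = card H + card (E - H)" using HE finE
    using card_Diff_subset[OF finH HE] card_mono[OF finE HE] by simp
  have "real (card E) \<le> (lam + 1) * real (card H)"
  proof -
    have "0 \<le> lam * real (card H)" using assms(5) by simp
    moreover have "real (card E) = real (card H) + real (card (E - H))" using cE by simp
    ultimately show ?thesis using s2 by (simp add: algebra_simps)
  qed
  hence "avg_deg (A \<union> B) H \<ge> avg_deg (A \<union> B) E / (lam + 1)"
    unfolding avg_deg_def using assms(5)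
    by (cases "card (A \<union> B) = 0") (simp_all add: divide_simps mult.commute)
  then show "\<exists>H. H \<subseteq> E \<and> avg_deg (A \<union> B) H \<ge> avg_deg (A \<union> B) E / (lam + 1) \<and>
            (\<forall>x\<in>B. \<forall>y\<in>B. x \<noteq> y \<longrightarrow> real (bcodeg H A x y) \<le> lam)"
    using HE cod by blast
qed

end
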